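(* Let $\tau$ be a signature, $\kappa$ an infinite cardinal, $s$ and $S^2_\kappa(\tau)$ as in the context. Let $\{\mathcal A_i:i\in I\}$ be a set of $\tau$-structures, for each $i\in I$ let $\overrightarrow{R^i_\kappa}=(R^i_k)_{k<\kappa}$ be relations of kind $s$ on $\mathcal A_i$, and put $U=\{\mathbf{tp}(\mathcal A_i,\overrightarrow{R^i_\kappa}):i\in I\}$. Let $J\subseteq I$, $\mathcal F$ an ultrafilter on $J$, $\mathcal A=\prod_{j\in J}\mathcal A_j/\mathcal F$, and $\overrightarrow{R_\kappa}$ the relations of kind $s$ on $\mathcal A$ given by $R_k=\prod_{j\in J}R^j_k/\mathcal F$ ($k<\kappa$). Then $\mathbf{tp}(\mathcal A,\overrightarrow{R_\kappa})\in\overline U$, where $\overline U$ is the topological closure of $U$ in $2^\lambda$. Furthermore, if $p\in\overline U$, then there exist a set $L\subseteq I$, an ultrafilter $\mathcal G$ on $L$, and relations $\overrightarrow{S^l_\kappa}$ of kind $s$ on $\mathcal A_l$ ($l\in L$) such that $\mathbf{tp}(\mathcal B,\overrightarrow{S_\kappa})=p$, where $\mathcal B=\prod_{l\in L}\mathcal A_l/\mathcal G$ and $S_k=\prod_{l\in L}S^l_k/\mathcal G$ for $k<\kappa$.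
   Context: Fix a sequence $s=(s_k)_{k<\kappa}$ of natural numbers in which each value occurs $\kappa$ many times. Let $X_k$ ($k<\kappa$) be new relation symbols with arity $s_k$, and $F$ the set of first-order sentences of signature $\tau\cup\{X_k:k<\kappa\}$; $|F|=\lambda$ with a fixed enumeration $F=\{\phi_\xi:\xi<\lambda\}$, so subsets of $F$ are identified with elements of $2^\lambda$ (product topology). A $\kappa$-2-type is a set $p\subseteq F$ such that every finite subset of $p$ has a model and for every $\phi\in F$ either $\phi\in p$ or $\neg\phi\in p$; $S^2_\kappa(\tau)$ is the set of $\kappa$-2-types with the subspace topology from $2^\lambda$. A tuple $(R_k)_{k<\kappa}$ of relations on a $\tau$-structure $\mathcal A$ is of kind $s$ if $R_k\subseteq A^{s_k}$ for all $k$, and $\mathbf{tp}(\mathcal A,(R_k)_{k<\kappa})=\{\phi\in F:\langle\mathcal A,R_k\rangle_{k<\kappa}\models\phi\}$ with $X_k$ interpreted by $R_k$. *)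

theory Defs
  imports "HOL-Analysis.Analysis" "HOL-Library.Equipollence"
begin

datatype 'f trm = Var nat | Fn 'f "'f trm list"

datatype ('f, 'r) fm =
    Eq "'f trm" "'f trm"
  | Rel 'r "'f trm list"
  | Neg "('f, 'r) fm"
  | Conj "('f, 'r) fm" "('f, 'r) fm"
  | Ex nat "('f, 'r) fm"

fun fv_trm :: "'f trm \<Rightarrow> nat set" where
  "fv_trm (Var n) = {n}"
| "fv_trm (Fn f ts) = (\<Union>t\<in>set ts. fv_trm t)"

primrec fv :: "('f, 'r) fm \<Rightarrow> nat set" where
  "fv (Eq t u) = fv_trm t \<union> fv_trm u"
| "fv (Rel r ts) = (\<Union>t\<in>set ts. fv_trm t)"
| "fv (Neg \<phi>) = fv \<phi>"
| "fv (Conj \<phi> \<psi>) = fv \<phi> \<union> fv \<psi>"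
| "fv (Ex x \<phi>) = fv \<phi> - {x}"

fun wf_trm :: "('f \<Rightarrow> nat) \<Rightarrow> 'f trm \<Rightarrow> bool" where
  "wf_trm arF (Var n) = True"
| "wf_trm arF (Fn f ts) = (length ts = arF f \<and> (\<forall>t\<in>set ts. wf_trm arF t))"

primrec wf_fm :: "('f \<Rightarrow> nat) \<Rightarrow> ('r \<Rightarrow> nat) \<Rightarrow> ('f, 'r) fm \<Rightarrow> bool" where
  "wf_fm arF arR (Eq t u) = (wf_trm arF t \<and> wf_trm arF u)"
| "wf_fm arF arR (Rel r ts) = (length ts = arR r \<and> (\<forall>t\<in>set ts. wf_trm arF t))"
| "wf_fm arF arR (Neg \<phi>) = wf_fm arF arR \<phi>"
| "wf_fm arF arR (Conj \<phi> \<psi>) = (wf_fm arF arR \<phi> \<and> wf_fm arF arR \<psi>)"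
| "wf_fm arF arR (Ex x \<phi>) = wf_fm arF arR \<phi>"

record ('a, 'f, 'r) struc =
  univ :: "'a set"
  funs :: "'f \<Rightarrow> 'a list \<Rightarrow> 'a"
  rels :: "'r \<Rightarrow> 'a list set"

definition is_struc :: "('f \<Rightarrow> nat) \<Rightarrow> ('r \<Rightarrow> nat) \<Rightarrow> ('a, 'f, 'r) struc \<Rightarrow> bool" where
  "is_struc arF arR A \<longleftrightarrow> univ A \<noteq> {}
     \<and> (\<forall>f xs. length xs = arF f \<and> set xs \<subseteq> univ A \<longrightarrow> funs A f xs \<in> univ A)
     \<and> (\<forall>r. rels A r \<subseteq> {xs. length xs = arR r \<and> set xs \<subseteq> univ A})"

fun eval :: "('a, 'f, 'r) struc \<Rightarrow> (nat \<Rightarrow> 'a) \<Rightarrow> 'f trm \<Rightarrow> 'a" where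
  "eval A e (Var n) = e n"
| "eval A e (Fn f ts) = funs A f (map (eval A e) ts)"

primrec sat :: "('a, 'f, 'r) struc \<Rightarrow> (nat \<Rightarrow> 'a) \<Rightarrow> ('f, 'r) fm \<Rightarrow> bool" where
  "sat A e (Eq t u) = (eval A e t = eval A e u)"
| "sat A e (Rel r ts) = (map (eval A e) ts \<in> rels A r)"
| "sat A e (Neg \<phi>) = (\<not> sat A e \<phi>)"
| "sat A e (Conj \<phi> \<psi>) = (sat A e \<phi> \<and> sat A e \<psi>)"
| "sat A e (Ex x \<phi>) = (\<exists>a\<in>univ A. sat A (e(x := a)) \<phi>)"

definition kind :: "('k \<Rightarrow> nat) \<Rightarrow> ('a, 'f, 'r) struc \<Rightarrow> ('k \<Rightarrow> 'a list set) \<Rightarrow> bool" where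
  "kind s A R \<longleftrightarrow> (\<forall>k. R k \<subseteq> {xs. length xs = s k \<and> set xs \<subseteq> univ A})"

definition expand :: "('a, 'f, 'r) struc \<Rightarrow> ('k \<Rightarrow> 'a list set) \<Rightarrow> ('a, 'f, 'r + 'k) struc" where
  "expand A R = \<lparr>univ = univ A, funs = funs A, rels = case_sum (rels A) R\<rparr>"

definition ext_ar :: "('r \<Rightarrow> nat) \<Rightarrow> ('k \<Rightarrow> nat) \<Rightarrow> 'r + 'k \<Rightarrow> nat" where
  "ext_ar arR s = case_sum arR s"

text \<open>F: first-order sentences of signature tau plus X_k (k<kappa), X_k of arity s k.\<close>
definition Fsent :: "('f \<Rightarrow> nat) \<Rightarrow> ('r \<Rightarrow> nat) \<Rightarrow> ('k \<Rightarrow> nat) \<Rightarrow> ('f, 'r + 'k) fm set" where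
  "Fsent arF arR s = {\<phi>. wf_fm arF (ext_ar arR s) \<phi> \<and> fv \<phi> = {}}"

definition tp :: "('f \<Rightarrow> nat) \<Rightarrow> ('r \<Rightarrow> nat) \<Rightarrow> ('k \<Rightarrow> nat) \<Rightarrow> ('a, 'f, 'r) struc
     \<Rightarrow> ('k \<Rightarrow> 'a list set) \<Rightarrow> ('f, 'r + 'k) fm set" where
  "tp arF arR s A R = {\<phi> \<in> Fsent arF arR s. sat (expand A R) (\<lambda>_. SOME a. a \<in> univ A) \<phi>}"

section \<open>The space 2^lambda = 2^F (product of discrete two-point spaces)\<close>

definition cantorF :: "('f \<Rightarrow> nat) \<Rightarrow> ('r \<Rightarrow> nat) \<Rightarrow> ('k \<Rightarrow> nat) \<Rightarrow> (('f, 'r + 'k) fm \<Rightarrow> bool) topology" where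
  "cantorF arF arR s = product_topology (\<lambda>_. discrete_topology (UNIV :: bool set)) (Fsent arF arR s)"

text \<open>Identification of a subset of F with its characteristic function on F.\<close>
definition charF :: "('f \<Rightarrow> nat) \<Rightarrow> ('r \<Rightarrow> nat) \<Rightarrow> ('k \<Rightarrow> nat) \<Rightarrow> ('f, 'r + 'k) fm set \<Rightarrow> (('f, 'r + 'k) fm \<Rightarrow> bool)" where
  "charF arF arR s p = restrict (\<lambda>\<phi>. \<phi> \<in> p) (Fsent arF arR s)"

definition ultrafilter_on :: "'j set \<Rightarrow> 'j set set \<Rightarrow> bool" where
  "ultrafilter_on J U \<longleftrightarrow> U \<subseteq> Pow J \<and> J \<in> U \<and> {} \<notin> U
     \<and> (\<forall>X Y. X \<in> U \<and> Y \<in> U \<longrightarrow> X \<inter> Y \<in> U)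
     \<and> (\<forall>X Y. X \<in> U \<and> X \<subseteq> Y \<and> Y \<subseteq> J \<longrightarrow> Y \<in> U)
     \<and> (\<forall>X. X \<subseteq> J \<longrightarrow> X \<in> U \<or> J - X \<in> U)"

definition up_cls :: "'j set \<Rightarrow> 'j set set \<Rightarrow> ('j \<Rightarrow> ('a, 'f, 'r) struc) \<Rightarrow> ('j \<Rightarrow> 'a) \<Rightarrow> ('j \<Rightarrow> 'a) set" where
  "up_cls J U A f = {g \<in> PiE J (\<lambda>j. univ (A j)). {j \<in> J. f j = g j} \<in> U}"

definition up_dom :: "'j set \<Rightarrow> 'j set set \<Rightarrow> ('j \<Rightarrow> ('a, 'f, 'r) struc) \<Rightarrow> ('j \<Rightarrow> 'a) set set" where
  "up_dom J U A = up_cls J U A ` PiE J (\<lambda>j. univ (A j))"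

definition rep :: "('j \<Rightarrow> 'a) set \<Rightarrow> 'j \<Rightarrow> 'a" where
  "rep c = (SOME f. f \<in> c)"

definition up_rel :: "'j set \<Rightarrow> 'j set set \<Rightarrow> ('j \<Rightarrow> ('a, 'f, 'r) struc) \<Rightarrow> ('j \<Rightarrow> 'a list set) \<Rightarrow> ('j \<Rightarrow> 'a) set list set" where
  "up_rel J U A Rj = {cs. set cs \<subseteq> up_dom J U A \<and> {j \<in> J. map (\<lambda>c. rep c j) cs \<in> Rj j} \<in> U}"

definition uprod :: "'j set \<Rightarrow> 'j set set \<Rightarrow> ('j \<Rightarrow> ('a, 'f, 'r) struc) \<Rightarrow> (('j \<Rightarrow> 'a) set, 'f, 'r) struc" where
  "uprod J U A = \<lparr>univ = up_dom J U A,
     funs = (\<lambda>f cs. up_cls J U A (\<lambda>j\<in>J. funs (A j) f (map (\<lambda>c. rep c j) cs))),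
     rels = (\<lambda>r. up_rel J U A (\<lambda>j. rels (A j) r))\<rparr>"

end

theory Submission
  imports Defs
begin


lemma uf_J: "ultrafilter_on J U \<Longrightarrow> J \<in> U" by (simp add: ultrafilter_on_def)
lemma uf_empty: "ultrafilter_on J U \<Longrightarrow> {} \<notin> U" by (simp add: ultrafilter_on_def)

lemma ae_mono:
  assumes "ultrafilter_on J U" "{j\<in>J. P j} \<in> U" "\<And>j. j\<in>J \<Longrightarrow> P j \<Longrightarrow> Q j"
  shows "{j\<in>J. Q j} \<in> U"
proof -
  have "{j\<in>J. P j} \<subseteq> {j\<in>J. Q j}" using assms(3) by blast
  then show ?thesis using assms(1,2) unfolding ultrafilter_on_def by blast
qed

lemma ae_conj:
  assumes "ultrafilter_on J U" "{j\<in>J. P j} \<in> U" "{j\<in>J. Q j} \<in> U"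
  shows "{j\<in>J. P j \<and> Q j} \<in> U"
proof -
  have "{j\<in>J. P j \<and> Q j} = {j\<in>J. P j} \<inter> {j\<in>J. Q j}" by blast
  then show ?thesis using assms unfolding ultrafilter_on_def by metis
qed

lemma ae_True: "ultrafilter_on J U \<Longrightarrow> {j\<in>J. True} \<in> U" by (simp add: ultrafilter_on_def)

lemma ae_not:
  assumes "ultrafilter_on J U"
  shows "{j\<in>J. \<not> P j} \<in> U \<longleftrightarrow> {j\<in>J. P j} \<notin> U"
proof
  assume a: "{j\<in>J. \<not> P j} \<in> U"
  show "{j\<in>J. P j} \<notin> U"
  proof
    assume "{j\<in>J. P j} \<in> U"
    from ae_conj[OF assms this a] have "{j\<in>J. P j \<and> \<not> P j} \<in> U" .
    then show False using uf_empty[OF assms] by simp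
  qed
next
  assume "{j\<in>J. P j} \<notin> U"
  moreover have "J - {j\<in>J. P j} = {j\<in>J. \<not> P j}" by blast
  ultimately show "{j\<in>J. \<not> P j} \<in> U" using assms unfolding ultrafilter_on_def
    by (metis (no_types, lifting) mem_Collect_eq subsetI)
qed

lemma ae_cong:
  assumes "ultrafilter_on J U" "{j\<in>J. P j = Q j} \<in> U"
  shows "{j\<in>J. P j} \<in> U \<longleftrightarrow> {j\<in>J. Q j} \<in> U"
proof
  assume "{j\<in>J. P j} \<in> U"
  from ae_conj[OF assms(1) this assms(2)] show "{j\<in>J. Q j} \<in> U"
    by (rule ae_mono[OF assms(1)]) auto
next
  assume "{j\<in>J. Q j} \<in> U"
  from ae_conj[OF assms(1) this assms(2)] show "{j\<in>J. P j} \<in> U"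
    by (rule ae_mono[OF assms(1)]) auto
qed

lemma ae_all_list:
  assumes "ultrafilter_on J U" "\<forall>x\<in>set xs. {j\<in>J. P x j} \<in> U"
  shows "{j\<in>J. \<forall>x\<in>set xs. P x j} \<in> U"
  using assms(2)
proof (induction xs)
  case Nil
  then show ?case using ae_True[OF assms(1)] by simp
next
  case (Cons a xs)
  then have "{j\<in>J. P a j \<and> (\<forall>x\<in>set xs. P x j)} \<in> U"
    using ae_conj[OF assms(1)] by simp
  then show ?case by simp
qed

lemma up_cls_self: "ultrafilter_on J U \<Longrightarrow> f \<in> PiE J (\<lambda>j. univ (B j)) \<Longrightarrow> f \<in> up_cls J U B f"
  unfolding up_cls_def using ae_True by fastforce

lemma up_cls_eq:
  assumes "ultrafilter_on J U" "{j\<in>J. f j = g j} \<in> U"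
  shows "up_cls J U B f = up_cls J U B g"
proof -
  have "{j\<in>J. f j = h j} \<in> U \<longleftrightarrow> {j\<in>J. g j = h j} \<in> U" for h
    by (rule ae_cong[OF assms(1)], rule ae_mono[OF assms]) auto
  then show ?thesis unfolding up_cls_def by auto
qed

lemma up_cls_eq_iff:
  assumes "ultrafilter_on J U" "g \<in> PiE J (\<lambda>j. univ (B j))"
  shows "up_cls J U B f = up_cls J U B g \<longleftrightarrow> {j\<in>J. f j = g j} \<in> U"
proof
  assume "up_cls J U B f = up_cls J U B g"
  with up_cls_self[OF assms] have "g \<in> up_cls J U B f" by simp
  then show "{j\<in>J. f j = g j} \<in> U" unfolding up_cls_def by simp
qed (rule up_cls_eq[OF assms(1)])

lemma rep_in:
  assumes "ultrafilter_on J U" "c \<in> up_dom J U B"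
  shows "rep c \<in> c"
proof -
  from assms(2) obtain f where f: "f \<in> PiE J (\<lambda>j. univ (B j))" "c = up_cls J U B f"
    unfolding up_dom_def by blast
  then have "f \<in> c" using up_cls_self[OF assms(1)] by simp
  then show ?thesis unfolding rep_def by (metis someI_ex)
qed

lemma rep_PiE:
  assumes "ultrafilter_on J U" "c \<in> up_dom J U B"
  shows "rep c \<in> PiE J (\<lambda>j. univ (B j))"
proof -
  from assms(2) obtain f where "c = up_cls J U B f"
    unfolding up_dom_def by blast
  with rep_in[OF assms] show ?thesis unfolding up_cls_def by blast
qed

lemma rep_up_cls:
  assumes "ultrafilter_on J U" "f \<in> PiE J (\<lambda>j. univ (B j))"
  shows "{j\<in>J. rep (up_cls J U B f) j = f j} \<in> U"
proof -
  have "up_cls J U B f \<in> up_dom J U B" using assms(2) unfolding up_dom_def by blast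
  from rep_in[OF assms(1) this] have "{j\<in>J. f j = rep (up_cls J U B f) j} \<in> U"
    unfolding up_cls_def by simp
  then show ?thesis by (rule ae_mono[OF assms(1)]) auto
qed

lemma up_cls_rep:
  assumes "ultrafilter_on J U" "c \<in> up_dom J U B"
  shows "up_cls J U B (rep c) = c"
proof -
  from assms(2) obtain f where f: "f \<in> PiE J (\<lambda>j. univ (B j))" "c = up_cls J U B f"
    unfolding up_dom_def by blast
  from rep_in[OF assms] f have "{j\<in>J. f j = rep c j} \<in> U" unfolding up_cls_def by simp
  then show ?thesis using f up_cls_eq[OF assms(1)] by metis
qed

definition fclosed :: "('f \<Rightarrow> nat) \<Rightarrow> ('a, 'f, 'r) struc \<Rightarrow> bool" where
  "fclosed arF B \<longleftrightarrow> (\<forall>f xs. length xs = arF f \<and> set xs \<subseteq> univ B \<longrightarrow> funs B f xs \<in> univ B)"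

lemma eval_univ:
  assumes "fclosed arF B" "\<forall>n. e n \<in> univ B"
  shows "wf_trm arF t \<Longrightarrow> eval B e t \<in> univ B"
proof (induction t)
  case (Var x)
  then show ?case using assms by simp
next
  case (Fn f ts)
  then have "set (map (eval B e) ts) \<subseteq> univ B" by auto
  then show ?case using Fn.prems assms(1) unfolding fclosed_def by simp
qed

lemma eval_up:
  assumes uf: "ultrafilter_on J U" and cl: "\<forall>j\<in>J. fclosed arF (B j)"
    and e: "\<forall>n. e n \<in> up_dom J U B"
  shows "wf_trm arF t \<Longrightarrow> eval (uprod J U B) e t = up_cls J U B (\<lambda>j\<in>J. eval (B j) (\<lambda>n. rep (e n) j) t)"
proof (induction t)
  case (Var x)
  have "rep (e x) \<in> PiE J (\<lambda>j. univ (B j))" using rep_PiE[OF uf] e by blast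
  then have "(\<lambda>j\<in>J. rep (e x) j) = rep (e x)" by simp
  then show ?case using up_cls_rep[OF uf, of "e x" B] e by simp
next
  case (Fn f ts)
  define g where "g t = (\<lambda>j\<in>J. eval (B j) (\<lambda>n. rep (e n) j) t)" for t
  have gP: "g t \<in> PiE J (\<lambda>j. univ (B j))" if "wf_trm arF t" for t
  proof -
    have "eval (B j) (\<lambda>n. rep (e n) j) t \<in> univ (B j)" if "j \<in> J" for j
      using eval_univ[of arF "B j" "\<lambda>n. rep (e n) j" t] cl that \<open>wf_trm arF t\<close>
        rep_PiE[OF uf] e by (force simp: PiE_iff)
    then show ?thesis unfolding g_def by auto
  qed
  have IH: "eval (uprod J U B) e t = up_cls J U B (g t)" if "t \<in> set ts" for t
    using Fn.IH[OF that] Fn.prems that unfolding g_def by (simp add: restrict_def)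
  have ae: "{j\<in>J. \<forall>t\<in>set ts. rep (up_cls J U B (g t)) j = g t j} \<in> U"
    using Fn.prems gP by (intro ae_all_list[OF uf] ballI rep_up_cls[OF uf]) auto
  have "eval (uprod J U B) e (Fn f ts) =
      up_cls J U B (\<lambda>j\<in>J. funs (B j) f (map (\<lambda>t. rep (up_cls J U B (g t)) j) ts))"
    using IH by (simp add: uprod_def o_def cong: map_cong)
  also have "\<dots> = up_cls J U B (\<lambda>j\<in>J. funs (B j) f (map (\<lambda>t. g t j) ts))"
    by (rule up_cls_eq[OF uf], rule ae_mono[OF uf ae]) (auto cong: map_cong)
  also have "\<dots> = up_cls J U B (\<lambda>j\<in>J. eval (B j) (\<lambda>n. rep (e n) j) (Fn f ts))"
    by (rule arg_cong[where f="up_cls J U B"]) (auto simp: g_def cong: map_cong)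
  finally show ?case .
qed



lemma eval_cong: "(\<forall>n\<in>fv_trm t. e1 n = e2 n) \<Longrightarrow> eval B e1 t = eval B e2 t"
  by (induction t) (auto cong: map_cong)

lemma sat_cong: "(\<forall>n\<in>fv \<phi>. e1 n = e2 n) \<Longrightarrow> sat B e1 \<phi> = sat B e2 \<phi>"
proof (induction \<phi> arbitrary: e1 e2)
  case (Eq t u)
  then show ?case using eval_cong[of t e1 e2 B] eval_cong[of u e1 e2 B] by simp
next
  case (Rel r ts)
  then have "map (eval B e1) ts = map (eval B e2) ts"
    using eval_cong by (fastforce intro: map_cong)
  then show ?case by (simp only: sat.simps)
next
  case (Ex x \<phi>)
  have "sat B (e1(x := a)) \<phi> = sat B (e2(x := a)) \<phi>" for a
    using Ex.prems by (intro Ex.IH) auto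
  then show ?case by simp
next
  case (Conj \<phi>1 \<phi>2)
  have "sat B e1 \<phi>1 = sat B e2 \<phi>1" "sat B e1 \<phi>2 = sat B e2 \<phi>2"
    using Conj.prems by (intro Conj.IH; simp)+
  then show ?case by simp
qed auto

lemma los:
  assumes uf: "ultrafilter_on J U" and cl: "\<forall>j\<in>J. fclosed arF (B j)"
  shows "wf_fm arF arR \<phi> \<Longrightarrow> (\<forall>n. e n \<in> up_dom J U B) \<Longrightarrow>
    sat (uprod J U B) e \<phi> \<longleftrightarrow> {j\<in>J. sat (B j) (\<lambda>n. rep (e n) j) \<phi>} \<in> U"
proof (induction \<phi> arbitrary: e)
  case (Eq t u)
  define g where "g t = (\<lambda>j\<in>J. eval (B j) (\<lambda>n. rep (e n) j) t)" for t
  have gP: "g t \<in> PiE J (\<lambda>j. univ (B j))" if "wf_trm arF t" for t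
  proof -
    have "eval (B j) (\<lambda>n. rep (e n) j) t \<in> univ (B j)" if "j \<in> J" for j
      using eval_univ[of arF "B j" "\<lambda>n. rep (e n) j" t] cl that \<open>wf_trm arF t\<close>
        rep_PiE[OF uf] Eq.prems by (force simp: PiE_iff)
    then show ?thesis unfolding g_def by auto
  qed
  have "sat (uprod J U B) e (Eq t u) \<longleftrightarrow> up_cls J U B (g t) = up_cls J U B (g u)"
    using eval_up[OF uf cl, of e] Eq.prems by (simp add: g_def)
  also have "\<dots> \<longleftrightarrow> {j\<in>J. g t j = g u j} \<in> U"
    using up_cls_eq_iff[OF uf gP] Eq.prems by simp
  also have "\<dots> \<longleftrightarrow> {j\<in>J. sat (B j) (\<lambda>n. rep (e n) j) (Eq t u)} \<in> U"
    by (rule ae_cong[OF uf], rule ae_mono[OF uf ae_True[OF uf]]) (simp add: g_def)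
  finally show ?case .
next
  case (Rel r ts)
  define g where "g t = (\<lambda>j\<in>J. eval (B j) (\<lambda>n. rep (e n) j) t)" for t
  have gP: "g t \<in> PiE J (\<lambda>j. univ (B j))" if "wf_trm arF t" for t
  proof -
    have "eval (B j) (\<lambda>n. rep (e n) j) t \<in> univ (B j)" if "j \<in> J" for j
      using eval_univ[of arF "B j" "\<lambda>n. rep (e n) j" t] cl that \<open>wf_trm arF t\<close>
        rep_PiE[OF uf] Rel.prems by (force simp: PiE_iff)
    then show ?thesis unfolding g_def by auto
  qed
  have ev: "eval (uprod J U B) e t = up_cls J U B (g t)" if "t \<in> set ts" for t
    using eval_up[OF uf cl, of e t] Rel.prems that by (simp add: g_def)
  have dom: "set (map (eval (uprod J U B) e) ts) \<subseteq> up_dom J U B"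
    using ev gP Rel.prems unfolding up_dom_def by auto
  have ae: "{j\<in>J. \<forall>t\<in>set ts. rep (up_cls J U B (g t)) j = g t j} \<in> U"
    using Rel.prems gP by (intro ae_all_list[OF uf] ballI rep_up_cls[OF uf]) auto
  have "sat (uprod J U B) e (Rel r ts) \<longleftrightarrow>
     {j\<in>J. map (\<lambda>t. rep (up_cls J U B (g t)) j) ts \<in> rels (B j) r} \<in> U"
    using dom ev by (simp add: uprod_def up_rel_def o_def cong: map_cong)
  also have "\<dots> \<longleftrightarrow> {j\<in>J. sat (B j) (\<lambda>n. rep (e n) j) (Rel r ts)} \<in> U"
    by (rule ae_cong[OF uf], rule ae_mono[OF uf ae]) (auto simp: g_def cong: map_cong)
  finally show ?case .
next
  case (Neg \<phi>)
  then show ?case using ae_not[OF uf] by simp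
next
  case (Conj \<phi> \<psi>)
  have e1: "{j\<in>J. P j \<and> Q j} \<in> U \<longleftrightarrow> {j\<in>J. P j} \<in> U \<and> {j\<in>J. Q j} \<in> U" for P Q
    using ae_conj[OF uf, of P Q] ae_mono[OF uf, of "\<lambda>j. P j \<and> Q j" P] ae_mono[OF uf, of "\<lambda>j. P j \<and> Q j" Q]
    by blast
  show ?case using Conj e1 by simp
next
  case (Ex x \<phi>)
  have upd: "(\<lambda>n. rep ((e(x := c)) n) j) = (\<lambda>n. rep (e n) j)(x := rep c j)" for c j
    by auto
  have IH: "sat (uprod J U B) (e(x := c)) \<phi> \<longleftrightarrow>
      {j\<in>J. sat (B j) ((\<lambda>n. rep (e n) j)(x := rep c j)) \<phi>} \<in> U" if "c \<in> up_dom J U B" for c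
  proof -
    have h: "\<forall>n. (e(x := c)) n \<in> up_dom J U B" using Ex.prems(2) that by simp
    have w: "wf_fm arF arR \<phi>" using Ex.prems(1) by simp
    from Ex.IH[OF w h] show ?thesis unfolding upd .
  qed
  show ?case
  proof
    assume "sat (uprod J U B) e (Ex x \<phi>)"
    then obtain c where c: "c \<in> up_dom J U B" "sat (uprod J U B) (e(x := c)) \<phi>"
      by (auto simp: uprod_def)
    have "rep c \<in> PiE J (\<lambda>j. univ (B j))" using rep_PiE[OF uf c(1)] .
    then show "{j\<in>J. sat (B j) (\<lambda>n. rep (e n) j) (Ex x \<phi>)} \<in> U"
      using IH[OF c(1)] c(2) by (auto elim!: ae_mono[OF uf])
  next
    assume a: "{j\<in>J. sat (B j) (\<lambda>n. rep (e n) j) (Ex x \<phi>)} \<in> U"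
    define g where "g = (\<lambda>j\<in>J. if sat (B j) (\<lambda>n. rep (e n) j) (Ex x \<phi>)
        then (SOME a. a \<in> univ (B j) \<and> sat (B j) ((\<lambda>n. rep (e n) j)(x := a)) \<phi>)
        else rep (e 0) j)"
    have r0: "rep (e 0) \<in> PiE J (\<lambda>j. univ (B j))" using rep_PiE[OF uf] Ex.prems by blast
    have gj: "g j \<in> univ (B j) \<and> sat (B j) ((\<lambda>n. rep (e n) j)(x := g j)) \<phi>"
      if "j \<in> J" "sat (B j) (\<lambda>n. rep (e n) j) (Ex x \<phi>)" for j
    proof -
      from that(2) have "\<exists>a. a \<in> univ (B j) \<and> sat (B j) ((\<lambda>n. rep (e n) j)(x := a)) \<phi>"
        by (simp only: sat.simps Bex_def)
      then have "(SOME a. a \<in> univ (B j) \<and> sat (B j) ((\<lambda>n. rep (e n) j)(x := a)) \<phi>) \<in> univ (B j)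
         \<and> sat (B j) ((\<lambda>n. rep (e n) j)(x := (SOME a. a \<in> univ (B j) \<and> sat (B j) ((\<lambda>n. rep (e n) j)(x := a)) \<phi>))) \<phi>"
        by (rule someI_ex)
      moreover have "g j = (SOME a. a \<in> univ (B j) \<and> sat (B j) ((\<lambda>n. rep (e n) j)(x := a)) \<phi>)"
        using that unfolding g_def by simp
      ultimately show ?thesis by simp
    qed
    have gP: "g \<in> PiE J (\<lambda>j. univ (B j))"
      using gj r0 unfolding g_def by (auto simp: PiE_iff)
    define c where "c = up_cls J U B g"
    have c: "c \<in> up_dom J U B" using gP unfolding c_def up_dom_def by blast
    have "{j\<in>J. rep c j = g j} \<in> U" using rep_up_cls[OF uf gP] c_def by simp
    from ae_conj[OF uf this a]
    have "{j\<in>J. sat (B j) ((\<lambda>n. rep (e n) j)(x := rep c j)) \<phi>} \<in> U"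
      by (rule ae_mono[OF uf]) (use gj in auto)
    then have "sat (uprod J U B) (e(x := c)) \<phi>" using IH[OF c] by simp
    then show "sat (uprod J U B) e (Ex x \<phi>)" using c by (auto simp: uprod_def)
  qed
qed



lemma los_tp:
  assumes uf: "ultrafilter_on L G" and LI: "L \<subseteq> I"
    and structs: "\<forall>i\<in>I. is_struc arF arR (A i)"
  shows "tp arF arR s (uprod L G A) (\<lambda>k. up_rel L G A (\<lambda>l. R l k))
       = {\<phi> \<in> Fsent arF arR s. {l\<in>L. \<phi> \<in> tp arF arR s (A l) (R l)} \<in> G}"
proof -
  define B where "B l = expand (A l) (R l)" for l
  have cls: "up_cls L G B = up_cls L G A"
    by (rule ext) (simp add: up_cls_def B_def expand_def)
  have dom: "up_dom L G B = up_dom L G A"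
    by (simp add: up_dom_def cls) (simp add: B_def expand_def)
  have rel: "up_rel L G B = up_rel L G A"
    by (intro ext) (simp add: up_rel_def dom)
  have eq: "expand (uprod L G A) (\<lambda>k. up_rel L G A (\<lambda>l. R l k)) = uprod L G B"
  proof -
    have "case_sum (\<lambda>r. up_rel L G A (\<lambda>j. rels (A j) r)) (\<lambda>k. up_rel L G A (\<lambda>l. R l k))
        = (\<lambda>r. up_rel L G B (\<lambda>j. rels (B j) r))"
      by (rule ext, simp add: rel B_def expand_def split: sum.split)
    then show ?thesis
      by (simp add: expand_def uprod_def dom cls) (simp add: B_def expand_def)
  qed
  have cl: "\<forall>l\<in>L. fclosed arF (B l)"
    using structs LI unfolding fclosed_def is_struc_def B_def expand_def by auto
  have "PiE L (\<lambda>j. univ (A j)) \<noteq> {}"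
    using structs LI unfolding PiE_eq_empty_iff is_struc_def by auto
  then have ne: "up_dom L G A \<noteq> {}" unfolding up_dom_def by blast
  define e0 where "e0 = (\<lambda>_::nat. SOME a. a \<in> univ (uprod L G A))"
  have univ: "univ (uprod L G A) = up_dom L G A" by (simp add: uprod_def)
  have e0: "\<forall>n. e0 n \<in> up_dom L G B"
    unfolding e0_def univ dom using ne by (simp add: some_in_eq)
  have univB: "univ (B l) = univ (A l)" for l by (simp add: B_def expand_def)
  show ?thesis
  proof (rule set_eqI)
    fix \<phi>
    show "\<phi> \<in> tp arF arR s (uprod L G A) (\<lambda>k. up_rel L G A (\<lambda>l. R l k)) \<longleftrightarrow>
      \<phi> \<in> {\<phi> \<in> Fsent arF arR s. {l\<in>L. \<phi> \<in> tp arF arR s (A l) (R l)} \<in> G}"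
    proof (cases "\<phi> \<in> Fsent arF arR s")
      case False
      then show ?thesis by (simp add: tp_def)
    next
      case True
      then have wf: "wf_fm arF (ext_ar arR s) \<phi>" and fv: "fv \<phi> = {}"
        by (auto simp: Fsent_def)
      have "\<phi> \<in> tp arF arR s (uprod L G A) (\<lambda>k. up_rel L G A (\<lambda>l. R l k)) \<longleftrightarrow>
          sat (uprod L G B) e0 \<phi>"
        using True by (simp add: tp_def eq e0_def)
      also have "\<dots> \<longleftrightarrow> {l\<in>L. sat (B l) (\<lambda>n. rep (e0 n) l) \<phi>} \<in> G"
        by (rule los[OF uf cl wf e0])
      also have "\<dots> \<longleftrightarrow> {l\<in>L. \<phi> \<in> tp arF arR s (A l) (R l)} \<in> G"
      proof (rule ae_cong[OF uf], rule ae_mono[OF uf ae_True[OF uf]])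
        fix l assume "l \<in> L"
        have "sat (B l) e1 \<phi> = sat (B l) e2 \<phi>" for e1 e2 using sat_cong fv by blast
        then show "sat (B l) (\<lambda>n. rep (e0 n) l) \<phi> = (\<phi> \<in> tp arF arR s (A l) (R l))"
          using True by (simp add: tp_def B_def)
      qed
      finally show ?thesis using True by simp
    qed
  qed
qed



definition fip :: "'i set \<Rightarrow> 'i set set \<Rightarrow> bool" where
  "fip I M \<longleftrightarrow> (\<forall>F. finite F \<and> F \<subseteq> M \<longrightarrow> I \<inter> \<Inter>F \<noteq> {})"

lemma uf_exists:
  assumes Xs: "Xs \<subseteq> Pow I" "fip I Xs"
  shows "\<exists>G. ultrafilter_on I G \<and> Xs \<subseteq> G"
proof -
  define AA where "AA = {M. Xs \<subseteq> M \<and> M \<subseteq> Pow I \<and> fip I M}"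
  have "\<exists>M\<in>AA. \<forall>X\<in>AA. M \<subseteq> X \<longrightarrow> X = M"
  proof (rule subset_Zorn_nonempty)
    show "AA \<noteq> {}" using Xs unfolding AA_def by blast
  next
    fix C assume C: "C \<noteq> {}" "subset.chain AA C"
    have "fip I (\<Union>C)"
      unfolding fip_def
    proof (intro allI impI)
      fix F assume F: "finite F \<and> F \<subseteq> \<Union>C"
      from F C obtain B where B: "B \<in> C" "F \<subseteq> B"
        by (meson finite_subset_Union_chain)
      then have "fip I B" using C(2) unfolding subset.chain_def AA_def by auto
      then show "I \<inter> \<Inter>F \<noteq> {}" using F B unfolding fip_def by blast
    qed
    moreover have "\<Union>C \<subseteq> Pow I" using C(2) unfolding subset.chain_def AA_def by auto
    moreover have "Xs \<subseteq> \<Union>C"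
    proof -
      obtain c where "c \<in> C" using C(1) by blast
      then have "Xs \<subseteq> c" using C(2) unfolding subset.chain_def AA_def by blast
      then show ?thesis using \<open>c \<in> C\<close> by blast
    qed
    ultimately show "\<Union>C \<in> AA" unfolding AA_def by blast
  qed
  then obtain M where M: "M \<in> AA" and max: "\<And>X. X \<in> AA \<Longrightarrow> M \<subseteq> X \<Longrightarrow> X = M" by blast
  have MP: "M \<subseteq> Pow I" and Mf: "fip I M" and XM: "Xs \<subseteq> M" using M unfolding AA_def by auto
  have add: "X \<in> M" if "X \<subseteq> I" "fip I (insert X M)" for X
  proof -
    have "insert X M \<in> AA" using that MP XM unfolding AA_def by auto
    then have "insert X M = M" using max by blast
    then show ?thesis by blast
  qed
  have fipD: "I \<inter> \<Inter>F \<noteq> {}" if "finite F" "F \<subseteq> M" for F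
    using Mf that unfolding fip_def by blast
  have fipI: "fip I (insert X M)" if "\<And>F. finite F \<Longrightarrow> F \<subseteq> M \<Longrightarrow> \<exists>F'. finite F' \<and> F' \<subseteq> M \<and> I \<inter> \<Inter>F' \<subseteq> I \<inter> \<Inter>F \<inter> X" for X
    unfolding fip_def
  proof (intro allI impI)
    fix F assume F: "finite F \<and> F \<subseteq> insert X M"
    have "finite (F - {X})" "F - {X} \<subseteq> M" using F by auto
    from that[OF this] obtain F' where F': "finite F'" "F' \<subseteq> M" "I \<inter> \<Inter>F' \<subseteq> I \<inter> \<Inter>(F - {X}) \<inter> X"
      by blast
    have "I \<inter> \<Inter>(F - {X}) \<inter> X \<subseteq> I \<inter> \<Inter>F" by blast
    moreover have "I \<inter> \<Inter>F' \<noteq> {}" using fipD F'(1,2) by blast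
    ultimately show "I \<inter> \<Inter>F \<noteq> {}" using F'(3) by blast
  qed
  have "ultrafilter_on I M"
    unfolding ultrafilter_on_def
  proof (intro conjI allI impI)
    show "M \<subseteq> Pow I" by fact
    show "I \<in> M"
    proof (rule add)
      show "fip I (insert I M)"
      proof (rule fipI)
        fix F assume "finite F" "F \<subseteq> M"
        then show "\<exists>F'. finite F' \<and> F' \<subseteq> M \<and> I \<inter> \<Inter>F' \<subseteq> I \<inter> \<Inter>F \<inter> I" by (intro exI[of _ F]) blast
      qed
    qed simp
    show "{} \<notin> M" using fipD[of "{{}}"] by auto
  next
    fix X Y assume "X \<in> M \<and> Y \<in> M"
    then show "X \<inter> Y \<in> M"
    proof (intro add fipI)
      fix F assume "finite F" "F \<subseteq> M"
      then show "\<exists>F'. finite F' \<and> F' \<subseteq> M \<and> I \<inter> \<Inter>F' \<subseteq> I \<inter> \<Inter>F \<inter> (X \<inter> Y)"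
        using \<open>X \<in> M \<and> Y \<in> M\<close> by (intro exI[of _ "insert X (insert Y F)"]) blast
    qed (use MP \<open>X \<in> M \<and> Y \<in> M\<close> in blast)
  next
    fix X Y assume a: "X \<in> M \<and> X \<subseteq> Y \<and> Y \<subseteq> I"
    then show "Y \<in> M"
    proof (intro add fipI)
      fix F assume "finite F" "F \<subseteq> M"
      then show "\<exists>F'. finite F' \<and> F' \<subseteq> M \<and> I \<inter> \<Inter>F' \<subseteq> I \<inter> \<Inter>F \<inter> Y"
        using a by (intro exI[of _ "insert X F"]) blast
    qed (use a in blast)
  next
    fix X assume XI: "X \<subseteq> I"
    show "X \<in> M \<or> I - X \<in> M"
    proof (rule ccontr)
      assume "\<not> (X \<in> M \<or> I - X \<in> M)"
      then have nX: "X \<notin> M" and nX2: "I - X \<notin> M" by simp_all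
      have n1: "\<not> fip I (insert X M)" using add[OF XI] nX by metis
      have IX: "I - X \<subseteq> I" by blast
      have n2: "\<not> fip I (insert (I - X) M)" using add[OF IX] nX2 by metis
      from n1 obtain F1 where F1: "finite F1" "F1 \<subseteq> insert X M" "I \<inter> \<Inter>F1 = {}"
        unfolding fip_def by auto
      from n2 obtain F2 where F2: "finite F2" "F2 \<subseteq> insert (I - X) M" "I \<inter> \<Inter>F2 = {}"
        unfolding fip_def by auto
      have "I \<inter> \<Inter>((F1 - {X}) \<union> (F2 - {I - X})) \<noteq> {}"
        using F1 F2 by (intro fipD) auto
      then obtain z where z: "z \<in> I" "\<forall>Y\<in>F1 - {X}. z \<in> Y" "\<forall>Y\<in>F2 - {I - X}. z \<in> Y" by blast
      show False
      proof (cases "z \<in> X")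
        case True
        then have "z \<in> I \<inter> \<Inter>F1" using z by auto
        then show False using F1 by blast
      next
        case False
        then have "z \<in> I \<inter> \<Inter>F2" using z by auto
        then show False using F2 by blast
      qed
    qed
  qed
  then show ?thesis using XM by blast
qed



lemma charF_top: "charF arF arR s p \<in> topspace (cantorF arF arR s)"
  by (simp add: charF_def cantorF_def)

theorem lemma2p27:
  fixes arF :: "'f \<Rightarrow> nat" and arR :: "'r \<Rightarrow> nat" and s :: "'k \<Rightarrow> nat"
    and A :: "'i \<Rightarrow> ('a, 'f, 'r) struc" and R :: "'i \<Rightarrow> 'k \<Rightarrow> 'a list set"
    and I J :: "'i set" and U :: "'i set set"
  assumes kappa_inf: "infinite (UNIV :: 'k set)"
    and s_mult: "\<forall>n. {k. s k = n} \<approx> (UNIV :: 'k set)"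
    and structs: "\<forall>i\<in>I. is_struc arF arR (A i)"
    and kinds: "\<forall>i\<in>I. kind s (A i) (R i)"
    and JI: "J \<subseteq> I"
    and ultra: "ultrafilter_on J U"
  shows "charF arF arR s (tp arF arR s (uprod J U A) (\<lambda>k. up_rel J U A (\<lambda>j. R j k)))
           \<in> (cantorF arF arR s) closure_of (charF arF arR s ` (\<lambda>i. tp arF arR s (A i) (R i)) ` I)
       \<and> (\<forall>p. p \<subseteq> Fsent arF arR s \<and>
           charF arF arR s p \<in> (cantorF arF arR s) closure_of (charF arF arR s ` (\<lambda>i. tp arF arR s (A i) (R i)) ` I)
         \<longrightarrow> (\<exists>L G S. L \<subseteq> I \<and> ultrafilter_on L G \<and> (\<forall>l\<in>L. kind s (A l) (S l))
               \<and> tp arF arR s (uprod L G A) (\<lambda>k. up_rel L G A (\<lambda>l. S l k)) = p))"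
proof -
  define FS where "FS = Fsent arF arR s"
  define T where "T = (\<lambda>i. tp arF arR s (A i) (R i))"
  define ch where "ch = charF arF arR s"
  have chv: "ch q \<phi> = (\<phi> \<in> q)" if "\<phi> \<in> FS" for q \<phi> using that by (simp add: ch_def charF_def FS_def)
  have chP: "ch q \<in> PiE FS (\<lambda>_. UNIV)" for q by (simp add: ch_def charF_def FS_def)
  have opn: "openin (cantorF arF arR s) S \<longleftrightarrow> (\<forall>x \<in> S. \<exists>V. finite {\<phi> \<in> FS. V \<phi> \<noteq> UNIV} \<and>
                 x \<in> Pi\<^sub>E FS V \<and> Pi\<^sub>E FS V \<subseteq> S)" for S
    unfolding cantorF_def openin_product_topology_alt FS_def by simp
  have Jne: "J \<noteq> {}" using ultra unfolding ultrafilter_on_def by auto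
  then have Ine: "I \<noteq> {}" using JI by blast
  define T0 where "T0 = tp arF arR s (uprod J U A) (\<lambda>k. up_rel J U A (\<lambda>j. R j k))"
  have T0: "T0 = {\<phi> \<in> FS. {j\<in>J. \<phi> \<in> T j} \<in> U}"
    unfolding T0_def T_def FS_def by (simp only: los_tp[OF ultra JI structs])
  have agree: "{j\<in>J. (\<phi> \<in> T j) = (\<phi> \<in> T0)} \<in> U" if "\<phi> \<in> FS" for \<phi>
  proof (cases "\<phi> \<in> T0")
    case True
    then show ?thesis using T0 by simp
  next
    case False
    then have "{j\<in>J. \<phi> \<in> T j} \<notin> U" using T0 that by simp
    then show ?thesis using ae_not[OF ultra, of "\<lambda>j. \<phi> \<in> T j"] False by simp
  qed
  have P1: "ch T0 \<in> (cantorF arF arR s) closure_of (ch ` T ` I)"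
    unfolding in_closure_of
  proof (intro conjI allI impI)
    show "ch T0 \<in> topspace (cantorF arF arR s)" unfolding ch_def by (rule charF_top)
  next
    fix W assume W: "ch T0 \<in> W \<and> openin (cantorF arF arR s) W"
    then have "\<forall>x \<in> W. \<exists>V. finite {\<phi> \<in> FS. V \<phi> \<noteq> UNIV} \<and> x \<in> Pi\<^sub>E FS V \<and> Pi\<^sub>E FS V \<subseteq> W"
      using opn by simp
    then have "\<exists>V. finite {\<phi> \<in> FS. V \<phi> \<noteq> UNIV} \<and> ch T0 \<in> Pi\<^sub>E FS V \<and> Pi\<^sub>E FS V \<subseteq> W"
      using W by blast
    then obtain V where V: "finite {\<phi> \<in> FS. V \<phi> \<noteq> UNIV}" "ch T0 \<in> Pi\<^sub>E FS V" "Pi\<^sub>E FS V \<subseteq> W"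
      by blast
    obtain xs where xs: "set xs = {\<phi> \<in> FS. V \<phi> \<noteq> UNIV}" using V(1) finite_list by blast
    have "{j\<in>J. \<forall>\<phi>\<in>set xs. (\<phi> \<in> T j) = (\<phi> \<in> T0)} \<in> U"
      using agree xs by (intro ae_all_list[OF ultra]) auto
    then have "{j\<in>J. \<forall>\<phi>\<in>set xs. (\<phi> \<in> T j) = (\<phi> \<in> T0)} \<in> U" .
    then have "{j\<in>J. \<forall>\<phi>\<in>set xs. (\<phi> \<in> T j) = (\<phi> \<in> T0)} \<noteq> {}"
    proof -
      have gen: "S \<noteq> {}" if "S \<in> U" for S using that uf_empty[OF ultra] by blast
      from gen[OF \<open>{j\<in>J. \<forall>\<phi>\<in>set xs. (\<phi> \<in> T j) = (\<phi> \<in> T0)} \<in> U\<close>] show ?thesis .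
    qed
    then obtain j where j: "j \<in> J" "\<forall>\<phi>\<in>set xs. (\<phi> \<in> T j) = (\<phi> \<in> T0)"
      by blast
    have "ch (T j) \<in> Pi\<^sub>E FS V"
    proof -
      have "ch (T j) \<phi> \<in> V \<phi>" if "\<phi> \<in> FS" for \<phi>
      proof (cases "V \<phi> = UNIV")
        case False
        then have "\<phi> \<in> set xs" using xs that by simp
        then have "ch (T j) \<phi> = ch T0 \<phi>" using j chv that by simp
        then show ?thesis using V(2) that by (auto simp: PiE_iff)
      qed simp
      then show ?thesis using chP[of "T j"] by (auto simp: PiE_iff)
    qed
    then show "\<exists>y. y \<in> ch ` T ` I \<and> y \<in> W" using V(3) j(1) JI by blast
  qed
  have P2: "\<forall>p. p \<subseteq> FS \<and> ch p \<in> (cantorF arF arR s) closure_of (ch ` T ` I)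
         \<longrightarrow> (\<exists>L G S. L \<subseteq> I \<and> ultrafilter_on L G \<and> (\<forall>l\<in>L. kind s (A l) (S l))
               \<and> tp arF arR s (uprod L G A) (\<lambda>k. up_rel L G A (\<lambda>l. S l k)) = p)"
  proof (intro allI impI)
    fix p assume p: "p \<subseteq> FS \<and> ch p \<in> (cantorF arF arR s) closure_of (ch ` T ` I)"
    define X where "X \<phi> = {i\<in>I. (\<phi> \<in> T i) = (\<phi> \<in> p)}" for \<phi>
    have "fip I (X ` FS)"
      unfolding fip_def
    proof (intro allI impI)
      fix F assume F: "finite F \<and> F \<subseteq> X ` FS"
      then obtain F0 where F0: "F0 \<subseteq> FS" "finite F0" "F = X ` F0"
        by (meson finite_subset_image)
      define V where "V \<phi> = (if \<phi> \<in> F0 then {\<phi> \<in> p} else UNIV)" for \<phi>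
      have fin: "finite {\<phi> \<in> FS. V \<phi> \<noteq> UNIV}"
        by (rule finite_subset[OF _ F0(2)]) (auto simp: V_def)
      have op: "openin (cantorF arF arR s) (Pi\<^sub>E FS V)"
        unfolding opn using fin by blast
      have chp: "ch p \<in> Pi\<^sub>E FS V"
        using chP[of p] chv F0(1) by (auto simp: PiE_iff V_def)
      have cl: "\<forall>W. ch p \<in> W \<and> openin (cantorF arF arR s) W \<longrightarrow> (\<exists>y. y \<in> ch ` T ` I \<and> y \<in> W)"
        using p[THEN conjunct2] unfolding in_closure_of by (rule conjunct2)
      have "\<exists>y. y \<in> ch ` T ` I \<and> y \<in> Pi\<^sub>E FS V"
        using cl[rule_format, OF conjI[OF chp op]] .
      then obtain y where y: "y \<in> ch ` T ` I" "y \<in> Pi\<^sub>E FS V"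
        by blast
      then obtain i where i: "i \<in> I" "y = ch (T i)" by blast
      have "i \<in> X \<phi>" if "\<phi> \<in> F0" for \<phi>
      proof -
        have "ch (T i) \<phi> \<in> V \<phi>" using y(2) i(2) that F0(1) by (auto simp: PiE_iff)
        then show ?thesis using chv[of \<phi> "T i"] that F0(1) i(1) by (auto simp: V_def X_def)
      qed
      then have "i \<in> I \<inter> \<Inter>F" using F0(3) i(1) by blast
      then show "I \<inter> \<Inter>F \<noteq> {}" by blast
    qed
    moreover have "X ` FS \<subseteq> Pow I" unfolding X_def by blast
    ultimately obtain G where G: "ultrafilter_on I G" "X ` FS \<subseteq> G"
      using uf_exists by blast
    have tpG: "tp arF arR s (uprod I G A) (\<lambda>k. up_rel I G A (\<lambda>l. R l k)) = {\<phi> \<in> FS. {i\<in>I. \<phi> \<in> T i} \<in> G}"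
      unfolding T_def FS_def by (simp only: los_tp[OF G(1) subset_refl structs])
    have "{\<phi> \<in> FS. {i\<in>I. \<phi> \<in> T i} \<in> G} = p"
    proof (rule set_eqI)
      fix \<phi>
      show "\<phi> \<in> {\<phi> \<in> FS. {i\<in>I. \<phi> \<in> T i} \<in> G} \<longleftrightarrow> \<phi> \<in> p"
      proof (cases "\<phi> \<in> FS")
        case False
        then show ?thesis using p by auto
      next
        case True
        then have XG: "X \<phi> \<in> G" using G(2) by blast
        show ?thesis
        proof (cases "\<phi> \<in> p")
          case True
          then show ?thesis using XG \<open>\<phi> \<in> FS\<close> by (simp add: X_def)
        next
          case False
          then have "{i\<in>I. \<not> \<phi> \<in> T i} \<in> G" using XG by (simp add: X_def)
          then show ?thesis using ae_not[OF G(1), of "\<lambda>i. \<phi> \<in> T i"] False by simp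
        qed
      qed
    qed
    then show "\<exists>L G S. L \<subseteq> I \<and> ultrafilter_on L G \<and> (\<forall>l\<in>L. kind s (A l) (S l))
               \<and> tp arF arR s (uprod L G A) (\<lambda>k. up_rel L G A (\<lambda>l. S l k)) = p"
      using G(1) kinds tpG by blast
  qed
  show ?thesis using P1 P2 unfolding ch_def T_def T0_def FS_def by blast
qed


end
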